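(* In the setting of the context (no depth assumption), for every $n\geq1$ the following hold: (i) $M_{n-1}$ is a free right $M_{n-2}$-module with a basis contained in $C_{M_{n-1}}(N)$ if and only if there exist orthogonal dual bases for $E_{M_{n-2}}$ contained in $C_{M_{n-1}}(N)$; (ii) $M_n$ is a free right $M_{n-1}$-module with a basis contained in $C_{M_n}(M)$ if and only if there exist orthogonal dual bases for $E_{M_{n-1}}$ contained in $C_{M_n}(M)$.
   Context: $k$ is a field; $C_R(S)=\{r\in R:rs=sr\ \forall s\in S\}$. $N\subseteq M$ is a strongly separable, irreducible extension of $k$-algebras: $C_M(N)=k1$ and there are an $N$-bimodule map $E:M\to N$ and $x_1,\dots,x_n,y_1,\dots,y_n\in M$ with $\sum_iE(mx_i)y_i=m=\sum_ix_iE(y_im)$ for all $m\in M$, $E(1)\neq0$, $\sum_ix_iy_i\neq0$; normalized so that $E(1)=1$, whence $\sum_ix_iy_i=\lambda^{-1}1$ with $0\neq\lambda\in k$. Basic construction: given $S\subseteq R$, an $S$-bimodule map $E_S:R\to S$ with $E_S(1)=1$ and $r_i,s_i\in R$ with $\sum_iE_S(rr_i)s_i=r=\sum_ir_iE_S(s_ir)$ and $\sum_ir_is_i=\lambda^{-1}1$, set $R_1=R\otimes_SR$ with product $(a\otimes b)(c\otimes d)=aE_S(bc)\otimes d$, unit $\sum_ir_i\otimes s_i$, $R\subseteq R_1$ via $r\mapsto\sum_irr_i\otimes s_i$, and $E_R:R_1\to R$, $a\otimes b\mapsto\lambda ab$; then $E_R$ with $\lambda^{-1}r_i\otimes1$,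 $1\otimes s_i$ satisfy the same conditions with the same $\lambda$. Jones tower: $M_{-1}=N$, $M_0=M$, $E_{M_{-1}}=E$, and inductively $M_n$ with $E_{M_{n-1}}:M_n\to M_{n-1}$ is the basic construction of $(M_{n-2}\subseteq M_{n-1},E_{M_{n-2}})$. For an $S$-bimodule map $G:R\to S$, orthogonal dual bases for $G$ are finite families $\{z_i\},\{w_i\}$ in $R$ with $G(w_iz_j)=\delta_{ij}$ and $\sum_iz_iG(w_ix)=x=\sum_iG(xz_i)w_i$ for all $x\in R$. *)

theory Defs
  imports Main
begin

text \<open>All algebras of the Jones tower are realised as k-subalgebras of one ambient
 unital k-algebra (type 'a with scalar multiplication sc by the field 'k); the inclusions
 M_{n-1} into M_n become set inclusions (ambient = direct limit of the tower).\<close>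

definition kalg :: "('k::field \<Rightarrow> 'a::ring_1 \<Rightarrow> 'a) \<Rightarrow> bool" where
  "kalg sc \<longleftrightarrow>
     (\<forall>c a b. sc c (a + b) = sc c a + sc c b) \<and>
     (\<forall>c d a. sc (c + d) a = sc c a + sc d a) \<and>
     (\<forall>c d a. sc (c * d) a = sc c (sc d a)) \<and>
     (\<forall>a. sc 1 a = a) \<and>
     (\<forall>c a b. sc c (a * b) = sc c a * b \<and> sc c (a * b) = a * sc c b)"

definition subalg :: "('k::field \<Rightarrow> 'a::ring_1 \<Rightarrow> 'a) \<Rightarrow> 'a set \<Rightarrow> bool" where
  "subalg sc A \<longleftrightarrow> 0 \<in> A \<and> 1 \<in> A \<and>
     (\<forall>a\<in>A. \<forall>b\<in>A. a + b \<in> A \<and> a * b \<in> A) \<and>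
     (\<forall>a\<in>A. - a \<in> A) \<and> (\<forall>c. \<forall>a\<in>A. sc c a \<in> A)"

definition centr :: "'a::ring_1 set \<Rightarrow> 'a set \<Rightarrow> 'a set" where
  "centr R X = {r \<in> R. \<forall>s\<in>X. r * s = s * r}"

definition bimod_map :: "'a::ring_1 set \<Rightarrow> 'a set \<Rightarrow> ('a \<Rightarrow> 'a) \<Rightarrow> bool" where
  "bimod_map S R E \<longleftrightarrow> (\<forall>x\<in>R. E x \<in> S) \<and>
     (\<forall>x\<in>R. \<forall>y\<in>R. E (x + y) = E x + E y) \<and>
     (\<forall>s\<in>S. \<forall>x\<in>R. E (s * x) = s * E x \<and> E (x * s) = E x * s)"

definition sep_data :: "('k::field \<Rightarrow> 'a::ring_1 \<Rightarrow> 'a) \<Rightarrow> 'a set \<Rightarrow> 'a set \<Rightarrow> ('a \<Rightarrow> 'a)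
    \<Rightarrow> 'k \<Rightarrow> nat \<Rightarrow> (nat \<Rightarrow> 'a) \<Rightarrow> (nat \<Rightarrow> 'a) \<Rightarrow> bool" where
  "sep_data sc S R E lam n x y \<longleftrightarrow> bimod_map S R E \<and>
     (\<forall>i<n. x i \<in> R \<and> y i \<in> R) \<and>
     (\<forall>m\<in>R. (\<Sum>i<n. E (m * x i) * y i) = m \<and> (\<Sum>i<n. x i * E (y i * m)) = m) \<and>
     E 1 = 1 \<and> lam \<noteq> 0 \<and> (\<Sum>i<n. x i * y i) = sc (inverse lam) 1"

text \<open>Finitely supported formal k-linear combinations of pairs in R \<times> R.\<close>
definition fsupp_on :: "'a set \<Rightarrow> ('a \<times> 'a \<Rightarrow> 'k::zero) \<Rightarrow> bool" where
  "fsupp_on R f \<longleftrightarrow> finite {p. f p \<noteq> 0} \<and> {p. f p \<noteq> 0} \<subseteq> R \<times> R"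

definition lin_ext :: "('k::field \<Rightarrow> 'a::ring_1 \<Rightarrow> 'a) \<Rightarrow> ('a \<Rightarrow> 'a \<Rightarrow> 'a) \<Rightarrow> ('a \<times> 'a \<Rightarrow> 'k) \<Rightarrow> 'a" where
  "lin_ext sc \<mu> f = (\<Sum>p\<in>{p. f p \<noteq> 0}. sc (f p) (\<mu> (fst p) (snd p)))"

definition delta :: "'b \<Rightarrow> 'b \<Rightarrow> 'k::field" where
  "delta p q = (if q = p then 1 else 0)"

text \<open>The k-span of the relations defining R \<otimes>_S R inside the free k-space on R \<times> R.\<close>
inductive_set trel :: "('k::field \<Rightarrow> 'a::ring_1 \<Rightarrow> 'a) \<Rightarrow> 'a set \<Rightarrow> 'a set \<Rightarrow> ('a \<times> 'a \<Rightarrow> 'k) set"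
  for sc :: "'k::field \<Rightarrow> 'a::ring_1 \<Rightarrow> 'a" and S :: "'a set" and R :: "'a set" where
  zero: "(\<lambda>_. 0) \<in> trel sc S R"
| add: "f \<in> trel sc S R \<Longrightarrow> g \<in> trel sc S R \<Longrightarrow> (\<lambda>p. f p + g p) \<in> trel sc S R"
| smult: "f \<in> trel sc S R \<Longrightarrow> (\<lambda>p. c * f p) \<in> trel sc S R"
| addl: "a \<in> R \<Longrightarrow> a' \<in> R \<Longrightarrow> b \<in> R \<Longrightarrow>
     (\<lambda>p. delta (a + a', b) p - delta (a, b) p - delta (a', b) p) \<in> trel sc S R"
| addr: "a \<in> R \<Longrightarrow> b \<in> R \<Longrightarrow> b' \<in> R \<Longrightarrow>
     (\<lambda>p. delta (a, b + b') p - delta (a, b) p - delta (a, b') p) \<in> trel sc S R"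
| scl: "a \<in> R \<Longrightarrow> b \<in> R \<Longrightarrow> (\<lambda>p. delta (sc c a, b) p - c * delta (a, b) p) \<in> trel sc S R"
| scr: "a \<in> R \<Longrightarrow> b \<in> R \<Longrightarrow> (\<lambda>p. delta (a, sc c b) p - c * delta (a, b) p) \<in> trel sc S R"
| bal: "a \<in> R \<Longrightarrow> b \<in> R \<Longrightarrow> s \<in> S \<Longrightarrow>
     (\<lambda>p. delta (a * s, b) p - delta (a, s * b) p) \<in> trel sc S R"

text \<open>R1 with E_R is (isomorphic, via a \<otimes> b \<mapsto> mu a b, to) the basic construction
  R \<otimes>_S R of (S \<subseteq> R, E_S), with R \<subseteq> R1 via r \<mapsto> \<Sum> r r_i \<otimes> s_i.\<close>
definition basic_constr :: "('k::field \<Rightarrow> 'a::ring_1 \<Rightarrow> 'a) \<Rightarrow> 'k \<Rightarrow> 'a set \<Rightarrow> 'a set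
    \<Rightarrow> ('a \<Rightarrow> 'a) \<Rightarrow> 'a set \<Rightarrow> ('a \<Rightarrow> 'a) \<Rightarrow> ('a \<Rightarrow> 'a \<Rightarrow> 'a) \<Rightarrow> bool" where
  "basic_constr sc lam S R ES R1 ER \<mu> \<longleftrightarrow>
     subalg sc R1 \<and> R \<subseteq> R1 \<and>
     (\<exists>n x y. sep_data sc S R ES lam n x y \<and> (\<forall>r\<in>R. r = (\<Sum>i<n. \<mu> (r * x i) (y i)))) \<and>
     (\<forall>a\<in>R. \<forall>b\<in>R. \<mu> a b \<in> R1) \<and>
     (\<forall>f. fsupp_on R f \<longrightarrow> (lin_ext sc \<mu> f = 0 \<longleftrightarrow> f \<in> trel sc S R)) \<and>
     (\<forall>z\<in>R1. \<exists>f. fsupp_on R f \<and> z = lin_ext sc \<mu> f) \<and>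
     (\<forall>a\<in>R. \<forall>b\<in>R. \<forall>c\<in>R. \<forall>d\<in>R. \<mu> a b * \<mu> c d = \<mu> (a * ES (b * c)) d) \<and>
     (\<forall>z\<in>R1. \<forall>z'\<in>R1. ER (z + z') = ER z + ER z') \<and>
     (\<forall>c. \<forall>z\<in>R1. ER (sc c z) = sc c (ER z)) \<and>
     (\<forall>a\<in>R. \<forall>b\<in>R. ER (\<mu> a b) = sc lam (a * b))"

text \<open>Jones tower, shifted by one: T 0 = M_{-1} = N, T (j+1) = M_j, EE j = E_{M_{j-1}} : T (j+1) \<rightarrow> T j.\<close>
definition jones_tower :: "('k::field \<Rightarrow> 'a::ring_1 \<Rightarrow> 'a) \<Rightarrow> 'k \<Rightarrow> 'a set \<Rightarrow> 'a set \<Rightarrow> ('a \<Rightarrow> 'a)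
    \<Rightarrow> (nat \<Rightarrow> 'a set) \<Rightarrow> (nat \<Rightarrow> 'a \<Rightarrow> 'a) \<Rightarrow> bool" where
  "jones_tower sc lam N M E T EE \<longleftrightarrow> T 0 = N \<and> T (Suc 0) = M \<and> EE 0 = E \<and>
     (\<forall>j. \<exists>\<mu>. basic_constr sc lam (T j) (T (Suc j)) (EE j) (T (Suc (Suc j))) (EE (Suc j)) \<mu>)"

definition free_right_basis :: "'a::ring_1 set \<Rightarrow> 'a set \<Rightarrow> 'a set \<Rightarrow> bool" where
  "free_right_basis S R B \<longleftrightarrow> B \<subseteq> R \<and>
     (\<forall>r\<in>R. \<exists>!c. (\<forall>b. b \<notin> B \<longrightarrow> c b = 0) \<and> (\<forall>b\<in>B. c b \<in> S) \<and>
        finite {b\<in>B. c b \<noteq> 0} \<and> r = (\<Sum>b\<in>{b\<in>B. c b \<noteq> 0}. b * c b))"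

definition odb :: "'a::ring_1 set \<Rightarrow> ('a \<Rightarrow> 'a) \<Rightarrow> nat \<Rightarrow> (nat \<Rightarrow> 'a) \<Rightarrow> (nat \<Rightarrow> 'a) \<Rightarrow> bool" where
  "odb R G m z w \<longleftrightarrow> (\<forall>i<m. z i \<in> R \<and> w i \<in> R) \<and>
     (\<forall>i<m. \<forall>j<m. G (w i * z j) = (if i = j then 1 else 0)) \<and>
     (\<forall>x\<in>R. (\<Sum>i<m. z i * G (w i * x)) = x \<and> (\<Sum>i<m. G (x * z i) * w i) = x)"

end

theory Submission
  imports Defs
begin


lemma subalg_sum: "subalg sc A \<Longrightarrow> (\<And>i. i\<in>I \<Longrightarrow> f i \<in> A) \<Longrightarrow> sum f I \<in> A"
  by (induction I rule: infinite_finite_induct) (auto simp: subalg_def)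

lemma bimod_zero: "bimod_map S R G \<Longrightarrow> 0 \<in> R \<Longrightarrow> G 0 = 0"
  unfolding bimod_map_def by (metis add.right_neutral add_left_cancel)

lemma bimod_sum:
  assumes "bimod_map S R G" "subalg sc R" "\<And>i. i\<in>I \<Longrightarrow> f i \<in> R"
  shows "G (sum f I) = (\<Sum>i\<in>I. G (f i))"
  using assms(3)
proof (induction I rule: infinite_finite_induct)
  case (infinite A) then show ?case using bimod_zero[OF assms(1)] assms(2) by (simp add: subalg_def)
next
  case empty then show ?case using bimod_zero[OF assms(1)] assms(2) by (simp add: subalg_def)
next
  case (insert x F)
  have "sum f F \<in> R" by (rule subalg_sum[OF assms(2)]) (use insert in auto)
  then show ?case using insert assms(1) unfolding bimod_map_def by auto
qed

lemma bimod_diff: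
  assumes "bimod_map S R G" "subalg sc R" "a \<in> R" "b \<in> R"
  shows "G (a - b) = G a - G b"
proof -
  have nb: "- b \<in> R" using assms by (simp add: subalg_def)
  have "G (b + - b) = G b + G (- b)" using assms nb unfolding bimod_map_def by blast
  then have "G (- b) = - G b" using bimod_zero[OF assms(1)] assms(2)
    by (simp add: subalg_def add_eq_0_iff2) 
  moreover have "G (a + - b) = G a + G (- b)" using assms nb unfolding bimod_map_def by blast
  ultimately show ?thesis by simp
qed

lemma annih:
  assumes "sep_data sc S R G lam k x y" "subalg sc R" "v \<in> R" "\<And>r. r\<in>R \<Longrightarrow> G (v*r) = 0"
  shows "v = 0"
proof -
  have "v = (\<Sum>i<k. G (v * x i) * y i)" using assms(1,3) unfolding sep_data_def by auto
  also have "\<dots> = 0" using assms(1,4) unfolding sep_data_def by auto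
  finally show ?thesis .
qed

lemma frb_coef:
  assumes "free_right_basis S R B" "finite F" "F \<subseteq> B" "\<forall>b\<in>F. c b \<in> S" "\<forall>b\<in>F. d b \<in> S"
    "(\<Sum>b\<in>F. b * c b) = (\<Sum>b\<in>F. b * d b)" "0 \<in> S" "(\<Sum>b\<in>F. b * c b) \<in> R" "b \<in> F"
  shows "c b = d b"
proof -
  define r where "r = (\<Sum>b\<in>F. b * c b)"
  define P where "P = (\<lambda>c. (\<forall>b. b \<notin> B \<longrightarrow> c b = 0) \<and> (\<forall>b\<in>B. c b \<in> S) \<and>
        finite {b\<in>B. c b \<noteq> 0} \<and> r = (\<Sum>b\<in>{b\<in>B. c b \<noteq> 0}. b * c b))"
  have ex: "\<exists>!c. P c" using assms(1,8) unfolding free_right_basis_def P_def r_def by blast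
  have gen: "P (\<lambda>b. if b \<in> F then e b else 0)" if "\<forall>b\<in>F. e b \<in> S" "r = (\<Sum>b\<in>F. b * e b)" for e
  proof -
    let ?e = "\<lambda>b. if b \<in> F then e b else 0"
    have sub: "{b\<in>B. ?e b \<noteq> 0} \<subseteq> F" by auto
    have "(\<Sum>b\<in>{b\<in>B. ?e b \<noteq> 0}. b * ?e b) = (\<Sum>b\<in>F. b * ?e b)"
      by (rule sum.mono_neutral_left[OF assms(2) sub]) (use assms(3) in auto)
    also have "\<dots> = (\<Sum>b\<in>F. b * e b)" by simp
    finally show ?thesis unfolding P_def using that assms(3,7) finite_subset[OF sub assms(2)] by auto
  qed
  have "P (\<lambda>b. if b \<in> F then c b else 0)" by (rule gen) (use assms r_def in auto)
  moreover have "P (\<lambda>b. if b \<in> F then d b else 0)" by (rule gen) (use assms r_def in auto)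
  ultimately have "(\<lambda>b. if b \<in> F then c b else 0) = (\<lambda>b. if b \<in> F then d b else 0)"
    using ex by blast
  then show ?thesis using assms(9) by meson
qed

lemma odb_free:
  fixes R :: "'a::ring_1 set" and sc :: "'k::field \<Rightarrow> 'a \<Rightarrow> 'a"
  assumes RS: "subalg sc R" "S \<subseteq> R" and S0: "0 \<in> S" and G: "bimod_map S R G" and O: "odb R G m z w"
  shows "free_right_basis S R (z ` {..<m})"
proof (cases "(1::'a) = 0")
  case True
  then have all0: "\<And>a::'a. a = 0" by (metis mult_1_right mult_zero_right)
  show ?thesis unfolding free_right_basis_def
  proof (intro conjI ballI)
    show "z ` {..<m} \<subseteq> R" using O unfolding odb_def by auto
    fix r assume "r \<in> R"
    show "\<exists>!c. (\<forall>b. b \<notin> z ` {..<m} \<longrightarrow> c b = 0) \<and> (\<forall>b\<in>z ` {..<m}. c b \<in> S) \<and>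
        finite {b\<in>z ` {..<m}. c b \<noteq> 0} \<and> r = (\<Sum>b\<in>{b\<in>z ` {..<m}. c b \<noteq> 0}. b * c b)"
      apply (rule ex1I[of _ "\<lambda>_. 0"])
      subgoal using S0 all0[of r] by simp
      subgoal for c by (rule ext) (rule all0)
      done
  qed
next
  case False
  let ?B = "z ` {..<m}"
  have zR: "\<And>i. i < m \<Longrightarrow> z i \<in> R" and wR: "\<And>i. i < m \<Longrightarrow> w i \<in> R"
    and orth: "\<And>i j. i < m \<Longrightarrow> j < m \<Longrightarrow> G (w i * z j) = (if i = j then 1 else 0)"
    and exp: "\<And>x. x \<in> R \<Longrightarrow> (\<Sum>i<m. z i * G (w i * x)) = x"
    using O unfolding odb_def by auto
  have Gin: "\<And>x. x \<in> R \<Longrightarrow> G x \<in> S" using G unfolding bimod_map_def by auto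
  have Gr: "\<And>s x. s \<in> S \<Longrightarrow> x \<in> R \<Longrightarrow> G (x * s) = G x * s" using G unfolding bimod_map_def by auto
  have mulR: "\<And>a b. a \<in> R \<Longrightarrow> b \<in> R \<Longrightarrow> a * b \<in> R" using RS unfolding subalg_def by auto
  have inj: "inj_on z {..<m}"
  proof (rule inj_onI)
    fix i j assume "i \<in> {..<m}" "j \<in> {..<m}" "z i = z j"
    then show "i = j" using orth[of i i] orth[of i j] False by (auto split: if_splits)
  qed
  show ?thesis unfolding free_right_basis_def
  proof (intro conjI ballI)
    show "?B \<subseteq> R" using zR by auto
    fix r assume r: "r \<in> R"
    define c0 where "c0 = (\<lambda>b. if b \<in> ?B then G (w (the_inv_into {..<m} z b) * r) else 0)"
    have c0z: "c0 (z j) = G (w j * r)" if "j < m" for j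
      using that inj by (simp add: c0_def the_inv_into_f_f)
    show "\<exists>!c. (\<forall>b. b \<notin> ?B \<longrightarrow> c b = 0) \<and> (\<forall>b\<in>?B. c b \<in> S) \<and>
        finite {b\<in>?B. c b \<noteq> 0} \<and> r = (\<Sum>b\<in>{b\<in>?B. c b \<noteq> 0}. b * c b)"
    proof (rule ex1I[of _ c0])
      have "(\<Sum>b\<in>{b\<in>?B. c0 b \<noteq> 0}. b * c0 b) = (\<Sum>b\<in>?B. b * c0 b)"
        by (rule sum.mono_neutral_left) auto
      also have "\<dots> = (\<Sum>i<m. z i * c0 (z i))" by (rule sum.reindex[OF inj, unfolded comp_def])
      also have "\<dots> = (\<Sum>i<m. z i * G (w i * r))" by (rule sum.cong) (auto simp: c0z)
      also have "\<dots> = r" using exp r by simp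
      finally show "(\<forall>b. b \<notin> ?B \<longrightarrow> c0 b = 0) \<and> (\<forall>b\<in>?B. c0 b \<in> S) \<and>
        finite {b\<in>?B. c0 b \<noteq> 0} \<and> r = (\<Sum>b\<in>{b\<in>?B. c0 b \<noteq> 0}. b * c0 b)"
        using c0z Gin mulR wR r by (auto simp: c0_def)
    next
      fix c assume P: "(\<forall>b. b \<notin> ?B \<longrightarrow> c b = 0) \<and> (\<forall>b\<in>?B. c b \<in> S) \<and>
        finite {b\<in>?B. c b \<noteq> 0} \<and> r = (\<Sum>b\<in>{b\<in>?B. c b \<noteq> 0}. b * c b)"
      have rB: "r = (\<Sum>b\<in>?B. b * c b)"
      proof -
        have "(\<Sum>b\<in>{b\<in>?B. c b \<noteq> 0}. b * c b) = (\<Sum>b\<in>?B. b * c b)"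
          by (rule sum.mono_neutral_left) auto
        then show ?thesis using P by simp
      qed
      also have "\<dots> = (\<Sum>i<m. z i * c (z i))" by (rule sum.reindex[OF inj, unfolded comp_def])
      finally have rz: "r = (\<Sum>i<m. z i * c (z i))" .
      show "c = c0"
      proof
        fix b show "c b = c0 b"
        proof (cases "b \<in> ?B")
          case False then show ?thesis using P by (simp add: c0_def)
        next
          case True
          then obtain j where j: "j < m" "b = z j" by auto
          have "G (w j * r) = G (\<Sum>i<m. w j * (z i * c (z i)))" by (simp add: rz sum_distrib_left)
          also have "\<dots> = (\<Sum>i<m. G (w j * (z i * c (z i))))"
            by (rule bimod_sum[OF G RS(1)]) (use P RS(2) zR wR mulR j in auto)
          also have "\<dots> = (\<Sum>i<m. G (w j * z i) * c (z i))"
            by (rule sum.cong) (use P RS(2) zR wR mulR j Gr in \<open>auto simp: mult.assoc[symmetric]\<close>)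
          also have "\<dots> = (\<Sum>i\<in>{j}. G (w j * z i) * c (z i))"
            by (rule sum.mono_neutral_right) (use j orth in auto)
          also have "\<dots> = c (z j)" using orth j by simp
          finally show ?thesis using j c0z by simp
        qed
      qed
    qed
  qed
qed



lemma free_odb:
  fixes R :: "'a::ring_1 set" and sc :: "'k::field \<Rightarrow> 'a \<Rightarrow> 'a"
  assumes SR: "subalg sc S" "subalg sc R" "S \<subseteq> R" and sep: "sep_data sc S R G lam k x y"
    and XS: "X \<subseteq> S" and FB: "free_right_basis S R B" and BC: "B \<subseteq> centr R X"
  shows "\<exists>m z w. odb R G m z w \<and> (\<forall>i<m. z i \<in> centr R X \<and> w i \<in> centr R X)"
proof (cases "(1::'a) = 0")
  case True
  then have all0: "\<And>a::'a. a = 0" by (metis mult_1_right mult_zero_right)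
  have "odb R G 0 (\<lambda>_. 0) (\<lambda>_. 0)" unfolding odb_def using all0 by auto
  then show ?thesis by blast
next
  case False
  have G: "bimod_map S R G" using sep unfolding sep_data_def by auto
  have xR: "\<And>i. i < k \<Longrightarrow> x i \<in> R" and yR: "\<And>i. i < k \<Longrightarrow> y i \<in> R"
    using sep unfolding sep_data_def by auto
  have sepR: "\<And>m. m \<in> R \<Longrightarrow> (\<Sum>i<k. x i * G (y i * m)) = m" using sep unfolding sep_data_def by auto
  have Gin: "\<And>x. x \<in> R \<Longrightarrow> G x \<in> S" using G unfolding bimod_map_def by auto
  have Gr: "\<And>s x. s \<in> S \<Longrightarrow> x \<in> R \<Longrightarrow> G (x * s) = G x * s" using G unfolding bimod_map_def by auto
  have Gl: "\<And>s x. s \<in> S \<Longrightarrow> x \<in> R \<Longrightarrow> G (s * x) = s * G x" using G unfolding bimod_map_def by auto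
  have mulR: "\<And>a b. a \<in> R \<Longrightarrow> b \<in> R \<Longrightarrow> a * b \<in> R" using SR unfolding subalg_def by auto
  have mulS: "\<And>a b. a \<in> S \<Longrightarrow> b \<in> S \<Longrightarrow> a * b \<in> S" using SR unfolding subalg_def by auto
  have S0: "0 \<in> S" using SR unfolding subalg_def by auto
  have S1: "1 \<in> S" using SR unfolding subalg_def by auto
  have BR: "B \<subseteq> R" using FB unfolding free_right_basis_def by auto
  have exc: "\<forall>i\<in>{..<k}. \<exists>c. (\<forall>b. b \<notin> B \<longrightarrow> c b = 0) \<and> (\<forall>b\<in>B. c b \<in> S) \<and>
        finite {b\<in>B. c b \<noteq> 0} \<and> x i = (\<Sum>b\<in>{b\<in>B. c b \<noteq> 0}. b * c b)"
    using FB xR unfolding free_right_basis_def by blast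
  obtain cx where cx: "\<forall>i\<in>{..<k}. (\<forall>b. b \<notin> B \<longrightarrow> cx i b = 0) \<and> (\<forall>b\<in>B. cx i b \<in> S) \<and>
        finite {b\<in>B. cx i b \<noteq> 0} \<and> x i = (\<Sum>b\<in>{b\<in>B. cx i b \<noteq> 0}. b * cx i b)"
    using bchoice[OF exc] by blast
  define F where "F = (\<Union>i<k. {b\<in>B. cx i b \<noteq> 0})"
  have finF: "finite F" unfolding F_def using cx by auto
  have FB': "F \<subseteq> B" unfolding F_def by auto
  have cxS: "cx i b \<in> S" if "i < k" for i b using cx that S0 by (cases "b \<in> B") auto
  have cxR: "cx i b \<in> R" if "i < k" for i b using cxS[OF that] SR(3) by auto
  have xF: "x i = (\<Sum>b\<in>F. b * cx i b)" if i: "i < k" for i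
  proof -
    have "(\<Sum>b\<in>{b\<in>B. cx i b \<noteq> 0}. b * cx i b) = (\<Sum>b\<in>F. b * cx i b)"
      by (rule sum.mono_neutral_left[OF finF]) (use i F_def in auto)
    then show ?thesis using cx i by auto
  qed
  define wb where "wb b = (\<Sum>i<k. cx i b * y i)" for b
  have wbR: "wb b \<in> R" for b unfolding wb_def
    by (rule subalg_sum[OF SR(2)]) (simp add: mulR cxR yR)
  have Gwb: "G (wb b * r) = (\<Sum>i<k. cx i b * G (y i * r))" if r: "r \<in> R" for b r
  proof -
    have "G (wb b * r) = G (\<Sum>i<k. cx i b * (y i * r))"
      by (simp add: wb_def sum_distrib_right mult.assoc)
    also have "\<dots> = (\<Sum>i<k. G (cx i b * (y i * r)))"
      by (rule bimod_sum[OF G SR(2)]) (simp add: mulR cxR yR r)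
    also have "\<dots> = (\<Sum>i<k. cx i b * G (y i * r))"
      by (rule sum.cong) (use cxS yR mulR r Gl in auto)
    finally show ?thesis .
  qed
  have GS: "G (wb b * r) \<in> S" if "r \<in> R" for b r using Gin mulR wbR that by auto
  have expand: "r = (\<Sum>b\<in>F. b * G (wb b * r))" if r: "r \<in> R" for r
  proof -
    have "r = (\<Sum>i<k. x i * G (y i * r))" using sepR r by simp
    also have "\<dots> = (\<Sum>i<k. \<Sum>b\<in>F. b * (cx i b * G (y i * r)))"
      by (rule sum.cong) (auto simp: xF sum_distrib_right mult.assoc)
    also have "\<dots> = (\<Sum>b\<in>F. \<Sum>i<k. b * (cx i b * G (y i * r)))" by (rule sum.swap)
    also have "\<dots> = (\<Sum>b\<in>F. b * G (wb b * r))"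
      by (rule sum.cong) (auto simp: Gwb r sum_distrib_left)
    finally show ?thesis .
  qed
  have BF: "B \<subseteq> F"
  proof
    fix b assume b: "b \<in> B"
    show "b \<in> F"
    proof (rule ccontr)
      assume nb: "b \<notin> F"
      let ?c = "\<lambda>b'. if b' = b then 1 else 0"
      let ?d = "\<lambda>b'. if b' \<in> F then G (wb b' * b) else 0"
      have bR: "b \<in> R" using b BR by auto
      have z0: "(\<Sum>b'\<in>F. b' * ?c b') = 0" using nb by (intro sum.neutral) auto
      have e1: "(\<Sum>b'\<in>insert b F. b' * ?c b') = b" using nb finF z0 by simp
      have "(\<Sum>b'\<in>insert b F. b' * ?d b') = (\<Sum>b'\<in>F. b' * G (wb b' * b))" using nb finF by simp
      also have "\<dots> = b" using expand[OF bR] by simp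
      finally have e2: "(\<Sum>b'\<in>insert b F. b' * ?d b') = b" .
      have "?c b = ?d b"
        apply (rule frb_coef[OF FB, of "insert b F" ?c ?d])
        subgoal using finF by simp
        subgoal using FB' b by simp
        subgoal using S0 S1 by simp
        subgoal using S0 GS bR by simp
        subgoal using e1 e2 by simp
        subgoal using S0 .
        subgoal using e1 bR by simp
        subgoal by simp
        done
      then show False using nb False by simp
    qed
  qed
  have FeqB: "F = B" using BF FB' by auto
  have finB: "finite B" using finF FeqB by simp
  have expandB: "r = (\<Sum>b\<in>B. b * G (wb b * r))" if "r \<in> R" for r using expand[OF that] FeqB by simp
  have orth: "G (wb b * b') = (if b = b' then 1 else 0)" if b: "b \<in> B" and b': "b' \<in> B" for b b'
  proof -
    let ?c = "\<lambda>b. if b = b' then 1 else 0"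
    have e1: "(\<Sum>b\<in>B. b * ?c b) = b'" using b' finB
      by (simp add: if_distrib[of "\<lambda>v. _ * v"] cong: if_cong)
    have b'R: "b' \<in> R" using b' BR by auto
    have "?c b = G (wb b * b')"
      apply (rule frb_coef[OF FB finB, where c="?c" and d="\<lambda>b. G (wb b * b')"])
      subgoal by simp
      subgoal using S0 S1 by simp
      subgoal using GS b'R by simp
      subgoal using e1 expandB[OF b'R] by simp
      subgoal using S0 .
      subgoal using e1 b'R by simp
      subgoal using b .
      done
    then show ?thesis by simp
  qed
  have central: "wb b \<in> centr R X" if b: "b \<in> B" for b
    unfolding centr_def
  proof (intro CollectI conjI ballI wbR)
    fix t assume t: "t \<in> X"
    have tS: "t \<in> S" and tR: "t \<in> R" using t XS SR(3) by auto
    have key: "G (wb b * (t * r)) = t * G (wb b * r)" if r: "r \<in> R" for r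
    proof -
      have trR: "t * r \<in> R" using mulR tR r by auto
      have "(\<Sum>b\<in>B. b * (t * G (wb b * r))) = (\<Sum>b\<in>B. t * (b * G (wb b * r)))"
      proof (rule sum.cong)
        fix b'' assume "b'' \<in> B"
        then have "b'' * t = t * b''" using BC t unfolding centr_def by auto
        then show "b'' * (t * G (wb b'' * r)) = t * (b'' * G (wb b'' * r))"
          by (metis mult.assoc)
      qed simp
      also have "\<dots> = t * r" by (simp only: sum_distrib_left[symmetric] expandB[OF r, symmetric])
      finally have e1: "(\<Sum>b\<in>B. b * (t * G (wb b * r))) = t * r" .
      show ?thesis
        apply (rule frb_coef[OF FB finB, where c="\<lambda>b. G (wb b * (t * r))" and d="\<lambda>b. t * G (wb b * r)"])
        subgoal by simp
        subgoal using GS trR by simp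
        subgoal using GS r mulS tS by simp
        subgoal using e1 expandB[OF trR] by simp
        subgoal using S0 .
        subgoal using expandB[OF trR] trR by simp
        subgoal using b .
        done
    qed
    have v: "wb b * t - t * wb b \<in> R" using SR(2) mulR wbR tR unfolding subalg_def
      by (metis diff_conv_add_uminus)
    have "wb b * t - t * wb b = 0"
    proof (rule annih[OF sep SR(2) v])
      fix r assume r: "r \<in> R"
      have "(wb b * t - t * wb b) * r = wb b * (t * r) - t * (wb b * r)"
        by (simp add: algebra_simps)
      then have "G ((wb b * t - t * wb b) * r) = G (wb b * (t * r)) - G (t * (wb b * r))"
        using bimod_diff[OF G SR(2)] mulR wbR tR r by auto
      also have "\<dots> = 0" using key[OF r] Gl[OF tS] mulR wbR r by auto
      finally show "G ((wb b * t - t * wb b) * r) = 0" .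
    qed
    then show "wb b * t = t * wb b" by simp
  qed
  obtain h where h: "bij_betw h {..<card B} B"
    using ex_bij_betw_nat_finite[OF finB] by (auto simp: atLeast0LessThan)
  have hB: "\<And>i. i < card B \<Longrightarrow> h i \<in> B" using h by (auto simp: bij_betw_def)
  have hinj: "inj_on h {..<card B}" using h by (auto simp: bij_betw_def)
  have "odb R G (card B) h (\<lambda>i. wb (h i))" unfolding odb_def
  proof (intro conjI allI impI ballI)
    fix i assume "i < card B" then show "h i \<in> R" "wb (h i) \<in> R" using hB BR wbR by auto
  next
    fix i j assume "i < card B" "j < card B"
    then show "G (wb (h i) * h j) = (if i = j then 1 else 0)"
      using orth hB hinj by (auto simp: inj_on_eq_iff)
  next
    fix x' assume x': "x' \<in> R"
    have "(\<Sum>i<card B. h i * G (wb (h i) * x')) = (\<Sum>b\<in>B. b * G (wb b * x'))"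
      by (rule sum.reindex_bij_betw[OF h])
    then show "(\<Sum>i<card B. h i * G (wb (h i) * x')) = x'" using expandB[OF x'] by simp
    have re: "(\<Sum>i<card B. G (x' * h i) * wb (h i)) = (\<Sum>b\<in>B. G (x' * b) * wb b)"
      by (rule sum.reindex_bij_betw[OF h])
    define u where "u = (\<Sum>b\<in>B. G (x' * b) * wb b)"
    have GxS: "\<And>b. b \<in> B \<Longrightarrow> G (x' * b) \<in> S" using Gin mulR x' BR by auto
    have GxR: "\<And>b. b \<in> B \<Longrightarrow> G (x' * b) \<in> R" using GxS SR(3) by auto
    have GR: "\<And>b r. r \<in> R \<Longrightarrow> G (wb b * r) \<in> R" using GS SR(3) by auto
    have uR: "u \<in> R" unfolding u_def
      by (rule subalg_sum[OF SR(2)]) (simp add: mulR GxR wbR)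
    have "u - x' = 0"
    proof (rule annih[OF sep SR(2)])
      show "u - x' \<in> R" using SR(2) uR x' unfolding subalg_def by (metis diff_conv_add_uminus)
      fix r assume r: "r \<in> R"
      have "G (u * r) = G (\<Sum>b\<in>B. G (x' * b) * (wb b * r))"
        by (simp add: u_def sum_distrib_right mult.assoc)
      also have "\<dots> = (\<Sum>b\<in>B. G (G (x' * b) * (wb b * r)))"
        by (rule bimod_sum[OF G SR(2)]) (simp add: mulR GxR wbR r)
      also have "\<dots> = (\<Sum>b\<in>B. G (x' * (b * G (wb b * r))))"
      proof (rule sum.cong)
        fix b assume b: "b \<in> B"
        have "G (G (x' * b) * (wb b * r)) = G (x' * b) * G (wb b * r)"
          using Gl GxS b mulR wbR r by auto
        also have "\<dots> = G (x' * b * G (wb b * r))" using Gr GS r mulR x' BR b by auto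
        finally show "G (G (x' * b) * (wb b * r)) = G (x' * (b * G (wb b * r)))"
          by (simp add: mult.assoc)
      qed simp
      also have "\<dots> = G (\<Sum>b\<in>B. x' * (b * G (wb b * r)))"
        by (rule bimod_sum[OF G SR(2), symmetric]) (use BR in \<open>auto simp: mulR GR x' r\<close>)
      also have "\<dots> = G (x' * r)" by (simp only: sum_distrib_left[symmetric] expandB[OF r, symmetric])
      finally have "G (u * r) = G (x' * r)" .
      moreover have "(u - x') * r = u * r - x' * r" by (simp add: algebra_simps)
      ultimately show "G ((u - x') * r) = 0" using bimod_diff[OF G SR(2)] mulR uR x' r by auto
    qed
    then show "(\<Sum>i<card B. G (x' * h i) * wb (h i)) = x'" using re u_def by simp
  qed
  moreover have "\<forall>i<card B. h i \<in> centr R X \<and> wb (h i) \<in> centr R X"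
    using hB BC central by auto
  ultimately show ?thesis by blast
qed



lemma equiv_free_odb:
  fixes R :: "'a::ring_1 set" and sc :: "'k::field \<Rightarrow> 'a \<Rightarrow> 'a"
  assumes SR: "subalg sc S" "subalg sc R" "S \<subseteq> R" and sep: "sep_data sc S R G lam k x y"
    and XS: "X \<subseteq> S"
  shows "(\<exists>B. free_right_basis S R B \<and> B \<subseteq> centr R X) \<longleftrightarrow>
     (\<exists>m z w. odb R G m z w \<and> (\<forall>i<m. z i \<in> centr R X \<and> w i \<in> centr R X))"
proof
  assume "\<exists>B. free_right_basis S R B \<and> B \<subseteq> centr R X"
  then show "\<exists>m z w. odb R G m z w \<and> (\<forall>i<m. z i \<in> centr R X \<and> w i \<in> centr R X)"
    using free_odb[OF SR sep XS] by blast
next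
  assume "\<exists>m z w. odb R G m z w \<and> (\<forall>i<m. z i \<in> centr R X \<and> w i \<in> centr R X)"
  then obtain m z w where o: "odb R G m z w" and c: "\<forall>i<m. z i \<in> centr R X" by blast
  have "free_right_basis S R (z ` {..<m})"
    by (rule odb_free[OF SR(2,3) _ _ o]) (use SR(1) sep in \<open>auto simp: subalg_def sep_data_def\<close>)
  moreover have "z ` {..<m} \<subseteq> centr R X" using c by auto
  ultimately show "\<exists>B. free_right_basis S R B \<and> B \<subseteq> centr R X" by blast
qed

theorem lemma3p1:
  fixes sc :: "'k::field \<Rightarrow> 'a::ring_1 \<Rightarrow> 'a" and lam :: 'k
    and N M :: "'a set" and E :: "'a \<Rightarrow> 'a"
    and T :: "nat \<Rightarrow> 'a set" and EE :: "nat \<Rightarrow> 'a \<Rightarrow> 'a" and n :: nat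
  assumes "kalg sc" and "subalg sc N" and "subalg sc M" and "N \<subseteq> M"
    and "centr M N = range (\<lambda>c. sc c 1)"
    and "\<exists>m x y. sep_data sc N M E lam m x y"
    and "jones_tower sc lam N M E T EE"
    and "n \<ge> 1"
  shows "((\<exists>B. free_right_basis (T (n - 1)) (T n) B \<and> B \<subseteq> centr (T n) N) \<longleftrightarrow>
          (\<exists>m z w. odb (T n) (EE (n - 1)) m z w \<and>
             (\<forall>i<m. z i \<in> centr (T n) N \<and> w i \<in> centr (T n) N)))
       \<and> ((\<exists>B. free_right_basis (T n) (T (Suc n)) B \<and> B \<subseteq> centr (T (Suc n)) M) \<longleftrightarrow>
          (\<exists>m z w. odb (T (Suc n)) (EE n) m z w \<and>
             (\<forall>i<m. z i \<in> centr (T (Suc n)) M \<and> w i \<in> centr (T (Suc n)) M)))"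
proof -
  have T0: "T 0 = N" and T1: "T (Suc 0) = M"
    and bc: "\<And>j. \<exists>\<mu>. basic_constr sc lam (T j) (T (Suc j)) (EE j) (T (Suc (Suc j))) (EE (Suc j)) \<mu>"
    using assms(7) unfolding jones_tower_def by auto
  have sub: "subalg sc (T j)" for j
  proof (cases j)
    case 0 then show ?thesis using T0 assms(2) by simp
  next
    case (Suc i) then show ?thesis
    proof (cases i)
      case 0 then show ?thesis using Suc T1 assms(3) by simp
    next
      case (Suc l) then show ?thesis using \<open>j = Suc i\<close> bc[of l] unfolding basic_constr_def by auto
    qed
  qed
  have mono1: "T j \<subseteq> T (Suc j)" for j
  proof (cases j)
    case 0 then show ?thesis using T0 T1 assms(4) by simp
  next
    case (Suc l) then show ?thesis using bc[of l] unfolding basic_constr_def by auto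
  qed
  have monoT: "T i \<subseteq> T j" if "i \<le> j" for i j
    using that
  proof (induction j)
    case 0 then show ?case by simp
  next
    case (Suc j) then show ?case using mono1[of j] by (cases "i = Suc j") auto
  qed
  have sep: "\<exists>k x y. sep_data sc (T j) (T (Suc j)) (EE j) lam k x y" for j
    using bc[of j] unfolding basic_constr_def by blast
  obtain j where j: "n = Suc j" using assms(8) by (cases n) auto
  have NT: "N \<subseteq> T j" using monoT[of 0 j] T0 by simp
  have MT: "M \<subseteq> T n" using monoT[of "Suc 0" n] T1 assms(8) by simp
  from sep[of j] obtain k x y where s1: "sep_data sc (T j) (T (Suc j)) (EE j) lam k x y" by blast
  from sep[of n] obtain k' x' y' where s2: "sep_data sc (T n) (T (Suc n)) (EE n) lam k' x' y'" by blast
  show ?thesis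
    using equiv_free_odb[OF sub sub mono1 s1 NT] equiv_free_odb[OF sub sub mono1 s2 MT] j by simp
qed

end
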